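(* Let $n\ge 1$ and let $\mathbf{u}=[u(1),\dots,u(n)]$ and $\mathbf{v}=[v(1),\dots,v(n)]$ be permutations in $S_n$ (one-line notation), with inverse functions $u^{-1},v^{-1}$. Define virtual levels $\ell_1,\dots,\ell_n$ by the following procedure: first, for $i=1,\dots,n$ set $\ell_{u(i)}\leftarrow n+1-i$; then, for $i=n-1,n-2,\dots,1$ (in this order) set $\ell_{v(i)}\leftarrow \max\{\ell_{v(i+1)}+1,\ \ell_{v(i)}\}$. Define the rewriting cost $C(\mathbf{u}\to\mathbf{v})=\ell_{v(1)}-n$, where $\ell_{v(1)}$ is the value at the end of the procedure. Then $$C(\mathbf{u}\to \mathbf{v})=\max_{i\in \{1,\dots,n\}}\bigl(v^{-1}(i)-u^{-1}(i)\bigr).$$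
   Context: A state of $n$ cells is a permutation $\mathbf{u}=[u(1),\dots,u(n)]\in S_n$, meaning cell $u(1)$ has the highest charge level and $u(n)$ the lowest; cell $u(i)$ has rank $i$, so $u^{-1}(j)$ is the rank (position) of cell $j$. The procedure in the claim models changing the state from $\mathbf{u}$ to $\mathbf{v}$ by "minimal-push-up" operations. *)

theory Defs
  imports "HOL-Combinatorics.Permutations"
begin

fun vl_init :: "nat \<Rightarrow> (nat \<Rightarrow> nat) \<Rightarrow> nat \<Rightarrow> (nat \<Rightarrow> int)" where
  "vl_init n u 0 = (\<lambda>_. 0)"
| "vl_init n u (Suc k) = (vl_init n u k)(u (Suc k) := int n + 1 - int (Suc k))"

text \<open>Second phase: k steps done, i.e. i = n-1, n-2, ..., n-k processed.\<close>
fun vl_proc :: "nat \<Rightarrow> (nat \<Rightarrow> nat) \<Rightarrow> (nat \<Rightarrow> nat) \<Rightarrow> nat \<Rightarrow> (nat \<Rightarrow> int)" where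
  "vl_proc n u v 0 = vl_init n u n"
| "vl_proc n u v (Suc k) =
     (let l = vl_proc n u v k; i = n - Suc k
      in l(v i := max (l (v (i + 1)) + 1) (l (v i))))"

definition rewrite_cost :: "nat \<Rightarrow> (nat \<Rightarrow> nat) \<Rightarrow> (nat \<Rightarrow> nat) \<Rightarrow> int" where
  "rewrite_cost n u v = vl_proc n u v (n - 1) (v 1) - int n"

end

theory Submission
  imports Defs
begin

lemma init_val:
  assumes "u permutes {1..n}"
  shows "k \<le> n \<Longrightarrow> j \<in> {1..k} \<Longrightarrow> vl_init n u k (u j) = int n + 1 - int j"
proof (induction k arbitrary: j)
  case 0 then show ?case by simp
next
  case (Suc k)
  have inj: "inj u" using assms permutes_inj by blast
  show ?case
  proof (cases "j = Suc k")
    case True then show ?thesis by simp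
  next
    case False
    then have "j \<in> {1..k}" using Suc.prems by auto
    moreover have "u j \<noteq> u (Suc k)" using False inj by (meson injD)
    ultimately show ?thesis using Suc by simp
  qed
qed

definition F :: "(nat \<Rightarrow> int) \<Rightarrow> nat \<Rightarrow> nat \<Rightarrow> int" where
  "F a n j = Max ((\<lambda>m. a m + int m - int j) ` {j..n})"

lemma F_step:
  assumes "1 \<le> i" "i < n"
  shows "F a n i = max (F a n (i+1) + 1) (a i)"
proof -
  have s: "{i..n} = insert i {i+1..n}" using assms by auto
  have ne: "{i+1..n} \<noteq> {}" using assms by auto
  have "(\<lambda>m. a m + int m - int i) ` {i+1..n} = (\<lambda>m. (a m + int m - int (i+1)) + 1) ` {i+1..n}"
    by auto
  then have "Max ((\<lambda>m. a m + int m - int i) ` {i+1..n}) = F a n (i+1) + 1"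
    unfolding F_def using Max_add_commute[OF _ ne, of "\<lambda>m. a m + int m - int (i+1)" 1] by (simp del: of_nat_Suc)
  then show ?thesis unfolding F_def s using ne
    by (simp add: max.commute)
qed

lemma F_last: "F a n n = a n"
  unfolding F_def by simp

lemma proc_val:
  assumes "v permutes {1..n}"
  shows "k \<le> n - 1 \<Longrightarrow> j \<in> {1..n} \<Longrightarrow>
    vl_proc n u v k (v j) = (if n - k \<le> j then F (\<lambda>m. vl_init n u n (v m)) n j
                             else vl_init n u n (v j))"
proof (induction k arbitrary: j)
  case 0 then show ?case by (auto simp: F_last)
next
  case (Suc k)
  have inj: "inj v" using assms permutes_inj by blast
  define i where "i = n - Suc k"
  have i1: "1 \<le> i" "i < n" using Suc.prems i_def by auto
  have ip: "i + 1 = n - k" using Suc.prems i_def by auto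
  have l1: "vl_proc n u v k (v (i+1)) = F (\<lambda>m. vl_init n u n (v m)) n (i+1)"
    using Suc.IH[of "i+1"] Suc.prems ip i1 by auto
  have l2: "vl_proc n u v k (v i) = vl_init n u n (v i)"
    using Suc.IH[of i] Suc.prems ip i1 by auto
  show ?case
  proof (cases "j = i")
    case True
    then show ?thesis using l1 l2 F_step[OF i1, of "\<lambda>m. vl_init n u n (v m)"]
      by (simp add: Let_def i_def[symmetric])
  next
    case False
    then have "v j \<noteq> v i" using inj by (meson injD)
    then have "vl_proc n u v (Suc k) (v j) = vl_proc n u v k (v j)"
      by (simp add: Let_def i_def[symmetric])
    moreover have "(n - Suc k \<le> j) = (n - k \<le> j)" using False i_def ip by auto
    ultimately show ?thesis using Suc by simp
  qed
qed

theorem theorem1: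
  fixes n :: nat and u v :: "nat \<Rightarrow> nat"
  assumes "n \<ge> 1" and "u permutes {1..n}" and "v permutes {1..n}"
  shows "rewrite_cost n u v =
    (MAX i \<in> {1..n}. int (inv v i) - int (inv u i))"
proof -
  have a: "vl_init n u n (v m) = int n + 1 - int (inv u (v m))" if "m \<in> {1..n}" for m
  proof -
    have vm: "v m \<in> {1..n}" using that permutes_in_image[OF assms(3)] by simp
    have "inv u (v m) \<in> {1..n}" using vm permutes_in_image[OF permutes_inv[OF assms(2)]] by simp
    moreover have "u (inv u (v m)) = v m" using permutes_inverses(1)[OF assms(2)] by simp
    ultimately show ?thesis using init_val[OF assms(2), of n "inv u (v m)"] by simp
  qed
  have "vl_proc n u v (n-1) (v 1) = F (\<lambda>m. vl_init n u n (v m)) n 1"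
    using proc_val[OF assms(3), of "n-1" 1] assms(1) by auto
  also have "\<dots> = Max ((\<lambda>m. int n + 1 - int (inv u (v m)) + int m - 1) ` {1..n})"
    unfolding F_def by (intro arg_cong[where f=Max] image_cong refl) (simp add: a)
  finally have c: "rewrite_cost n u v = Max ((\<lambda>m. (int m - int (inv u (v m))) + int n) ` {1..n}) - int n"
    unfolding rewrite_cost_def by (simp add: algebra_simps del: of_nat_Suc)
  have ne: "{1..n} \<noteq> {}" using assms(1) by auto
  have c2: "rewrite_cost n u v = Max ((\<lambda>m. int m - int (inv u (v m))) ` {1..n})"
    using c Max_add_commute[OF _ ne, of "\<lambda>m. int m - int (inv u (v m))" "int n"] by simp
  have "(\<lambda>i. int (inv v i) - int (inv u i)) ` {1..n} = (\<lambda>i. int (inv v i) - int (inv u i)) ` (v ` {1..n})"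
    using permutes_image[OF assms(3)] by simp
  also have "\<dots> = (\<lambda>m. int m - int (inv u (v m))) ` {1..n}"
    unfolding image_image using assms(3) permutes_inverses(2)[OF assms(3)] by simp
  finally show ?thesis using c2 by simp
qed

end
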